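(* Let $a>b\geq c>d>0$ be real numbers and define $f:\mathbb{R}\to\mathbb{R}$ by $$f(x)=\frac{a^x-b^x}{c^x-d^x}\quad (x\neq 0),\qquad f(0)=\frac{\ln(a/b)}{\ln(c/d)}.$$ Then $f$ is strictly convex on $\mathbb{R}$.
   Context: The value $f(0)$ is the continuous extension of $\frac{a^x-b^x}{c^x-d^x}$ at $x=0$. *)

theory Defs
  imports "HOL-Analysis.Analysis"
begin

definition strict_convex_on :: "real set \<Rightarrow> (real \<Rightarrow> real) \<Rightarrow> bool" where
  "strict_convex_on S f \<longleftrightarrow> convex S \<and>
     (\<forall>x\<in>S. \<forall>y\<in>S. \<forall>u::real. x \<noteq> y \<and> 0 < u \<and> u < 1 \<longrightarrow>
        f (u * x + (1 - u) * y) < u * f x + (1 - u) * f y)"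

definition ratio_fun :: "real \<Rightarrow> real \<Rightarrow> real \<Rightarrow> real \<Rightarrow> real \<Rightarrow> real" where
  "ratio_fun a b c d x =
     (if x = 0 then ln (a / b) / ln (c / d)
      else (a powr x - b powr x) / (c powr x - d powr x))"

end

theory Submission imports Defs "HOL-Real_Asymp.Real_Asymp" begin

lemma smono_aux:
  fixes g g' :: "real \<Rightarrow> real"
  assumes cont: "\<And>x. isCont g x"
    and der: "\<And>x. x \<noteq> 0 \<Longrightarrow> (g has_real_derivative g' x) (at x)"
    and pos: "\<And>x. x \<noteq> 0 \<Longrightarrow> g' x > 0"
    and ab: "a < b" and nz: "0 \<le> a \<or> b \<le> 0"
  shows "g a < g b"
proof (rule DERIV_pos_imp_increasing_open[OF ab])
  fix x assume "a < x" "x < b"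
  then have "x \<noteq> 0" using nz by auto
  then show "\<exists>y. DERIV g x :> y \<and> 0 < y" using der pos by blast
next
  show "continuous_on {a..b} g" using cont by (simp add: continuous_at_imp_continuous_on)
qed

lemma smono:
  fixes g g' :: "real \<Rightarrow> real"
  assumes cont: "\<And>x. isCont g x"
    and der: "\<And>x. x \<noteq> 0 \<Longrightarrow> (g has_real_derivative g' x) (at x)"
    and pos: "\<And>x. x \<noteq> 0 \<Longrightarrow> g' x > 0"
    and ab: "a < b"
  shows "g a < g b"
proof (cases "0 \<le> a \<or> b \<le> 0")
  case True then show ?thesis using smono_aux[OF assms] by blast
next
  case False
  then have "g a < g 0" "g 0 < g b" using smono_aux[OF cont der pos] by auto
  then show ?thesis by linarith
qed

lemma exp_strict: assumes "x \<noteq> (0::real)" shows "1 + x < exp x"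
proof (cases "x > 0")
  case True
  have "exp 0 - 0 < exp x - x"
  proof (rule DERIV_pos_imp_increasing_open[OF True])
    fix t :: real assume "0 < t" "t < x"
    have "((\<lambda>t. exp t - t) has_real_derivative exp t - 1) (at t)"
      by (auto intro!: derivative_eq_intros)
    moreover have "exp t - 1 > 0" using \<open>0 < t\<close> by simp
    ultimately show "\<exists>y. ((\<lambda>t. exp t - t) has_real_derivative y) (at t) \<and> 0 < y" by blast
  qed (auto intro!: continuous_intros)
  then show ?thesis by simp
next
  case False
  then have "x < 0" using assms by auto
  have "-(exp x - x) < -(exp 0 - 0)"
  proof (rule DERIV_pos_imp_increasing_open[OF \<open>x<0\<close>])
    fix t :: real assume "x < t" "t < 0"
    have "((\<lambda>t. -(exp t - t)) has_real_derivative -(exp t - 1)) (at t)"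
      by (auto intro!: derivative_eq_intros)
    moreover have "-(exp t - 1) > 0" using \<open>t < 0\<close> by simp
    ultimately show "\<exists>y. ((\<lambda>t. -(exp t - t)) has_real_derivative y) (at t) \<and> 0 < y" by blast
  qed (auto intro!: continuous_intros)
  then show ?thesis by simp
qed

lemma strict_conv_deriv:
  fixes g g' :: "real \<Rightarrow> real"
  assumes der: "\<And>x. (g has_real_derivative g' x) (at x)"
    and sm: "\<And>x y. x < y \<Longrightarrow> g' x < g' y"
    and xy: "x < y" and u: "0 < u" "u < 1"
  shows "g (u * x + (1 - u) * y) < u * g x + (1 - u) * g y"
proof -
  define z where "z = u * x + (1 - u) * y"
  have e1: "z - x = (1-u)*(y-x)" "y - z = u*(y-x)" unfolding z_def by algebra+
  have p1: "(1-u)*(y-x) > 0" and p2: "u*(y-x) > 0" using u xy by auto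
  have "0 < z - x" unfolding e1(1) by (rule p1)
  then have xz: "x < z" by simp
  have "0 < y - z" unfolding e1(2) by (rule p2)
  then have zy: "z < y" by simp
  obtain p where p: "x < p" "p < z" "g z - g x = (z - x) * g' p"
    using MVT2[OF xz] der by blast
  obtain q where q: "z < q" "q < y" "g y - g z = (y - z) * g' q"
    using MVT2[OF zy] der by blast
  have lt: "g' p < g' q" using sm p q by auto
  have A: "g z - g x = (1-u)*(y-x)*g' p" using p(3) e1 by simp
  have B: "g y - g z = u*(y-x)*g' q" using q(3) e1 by simp
  have "u * g x + (1 - u) * g y - g z = -u*(g z - g x) + (1-u)*(g y - g z)"
    by (simp add: algebra_simps)
  also have "\<dots> = -u*((1-u)*(y-x)*g' p) + (1-u)*(u*(y-x)*g' q)" by (simp only: A B)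
  also have "\<dots> = u*(1-u)*(y-x)*(g' q - g' p)" by (simp add: algebra_simps)
  finally have eq: "u * g x + (1 - u) * g y - g z = u*(1-u)*(y-x)*(g' q - g' p)" .
  have "u*(1-u)*(y-x)*(g' q - g' p) > 0" using u xy lt by (intro mult_pos_pos) auto
  then show ?thesis using eq unfolding z_def by linarith
qed

lemma ev_ne0: "eventually (\<lambda>y. y \<noteq> (0::real)) (at 0)"
  by (simp add: eventually_at_filter)

lemma h1pos: assumes "y \<noteq> (0::real)" shows "(y - 1) * exp y + 1 > 0"
proof -
  have "1 + (-y) < exp (-y)" using exp_strict[of "-y"] assms by simp
  then have "(1 - y) * exp y < exp (-y) * exp y" by simp
  also have "\<dots> = 1" by (simp add: mult_exp_exp)
  finally show ?thesis by (simp add: algebra_simps)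
qed

lemma h1pos': "x \<noteq> (0::real) \<Longrightarrow> exp x < 1 + x * exp x"
  using h1pos[of x] by (simp add: algebra_simps)

lemma sqpos: "x \<noteq> (0::real) \<Longrightarrow> 0 < x * (x * exp x)"
  by (simp add: zero_less_mult_iff mult_less_0_iff) (use not_less_iff_gr_or_eq in blast)

lemma ksign:
  fixes y :: real
  shows "y > 0 \<Longrightarrow> (y^2 - 2*y + 2) * exp y - 2 > 0"
    and "y < 0 \<Longrightarrow> (y^2 - 2*y + 2) * exp y - 2 < 0"
proof -
  let ?k = "\<lambda>y::real. (y^2 - 2*y + 2) * exp y - 2"
  have m: "?k a < ?k b" if "a < b" for a b
    by (rule smono[where g' = "\<lambda>y. y^2 * exp y", OF _ _ _ that])
       (auto intro!: continuous_intros derivative_eq_intros simp: algebra_simps power2_eq_square sqpos)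
  show "y > 0 \<Longrightarrow> ?k y > 0" using m[of 0 y] by simp
  show "y < 0 \<Longrightarrow> ?k y < 0" using m[of y 0] by simp
qed

lemma h2sign:
  fixes y :: real
  shows "y > 0 \<Longrightarrow> (y - 2) * exp y + y + 2 > 0"
    and "y < 0 \<Longrightarrow> (y - 2) * exp y + y + 2 < 0"
proof -
  let ?k = "\<lambda>y::real. (y - 2) * exp y + y + 2"
  have m: "?k a < ?k b" if "a < b" for a b
    by (rule smono[where g' = "\<lambda>y. (y - 1) * exp y + 1", OF _ _ _ that])
       (auto intro!: continuous_intros derivative_eq_intros simp: algebra_simps h1pos')
  show "y > 0 \<Longrightarrow> ?k y > 0" using m[of 0 y] by simp
  show "y < 0 \<Longrightarrow> ?k y < 0" using m[of y 0] by simp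
qed

definition E :: "real \<Rightarrow> real" where
  "E y = (if y = 0 then 1 else (exp y - 1) / y)"
definition E1 :: "real \<Rightarrow> real" where
  "E1 y = (if y = 0 then 1/2 else ((y - 1) * exp y + 1) / y^2)"
definition E2 :: "real \<Rightarrow> real" where
  "E2 y = ((y^2 - 2*y + 2) * exp y - 2) / y^3"

lemma E_der: "(E has_real_derivative E1 y) (at y)"
proof (cases "y = 0")
  case True
  have "((\<lambda>h::real. ((exp h - 1) / h - 1) / h) \<longlongrightarrow> 1/2) (at 0)" by real_asymp
  then have "((\<lambda>h::real. (E h - E 0) / (h - 0)) \<longlongrightarrow> 1/2) (at 0)"
    by (rule tendsto_cong[THEN iffD1, rotated]) (rule eventually_mono[OF ev_ne0], simp add: E_def)
  then show ?thesis using True by (simp add: has_field_derivative_iff E1_def)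
next
  case False
  have "((\<lambda>y. (exp y - 1) / y) has_real_derivative ((y - 1) * exp y + 1) / y^2) (at y)"
    using False by (auto intro!: derivative_eq_intros simp: field_simps power2_eq_square)
  then show ?thesis using False
    by (rule_tac has_field_derivative_transform_within_open[where S="-{0}"]) (auto simp: E_def E1_def)
qed

lemma E1_der: assumes "y \<noteq> 0" shows "(E1 has_real_derivative E2 y) (at y)"
proof -
  have "((\<lambda>y. ((y - 1) * exp y + 1) / y^2) has_real_derivative E2 y) (at y)"
    using assms by (auto intro!: derivative_eq_intros simp: E2_def field_simps power2_eq_square power3_eq_cube)
  then show ?thesis using assms
    by (rule_tac has_field_derivative_transform_within_open[where S="-{0}"]) (auto simp: E1_def)
qed

lemma E1_cont: "isCont E1 y"
proof (cases "y = 0")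
  case True
  have "((\<lambda>h::real. ((h - 1) * exp h + 1) / h^2) \<longlongrightarrow> 1/2) (at 0)" by real_asymp
  then have "(E1 \<longlongrightarrow> 1/2) (at 0)"
    by (rule tendsto_cong[THEN iffD1, rotated]) (rule eventually_mono[OF ev_ne0], simp add: E1_def)
  then have "(E1 \<longlongrightarrow> E1 0) (at 0)" by (simp add: E1_def)
  then show ?thesis using True by (simp add: isCont_def)
next
  case False
  then show ?thesis using E1_der DERIV_isCont by blast
qed

lemma E2_pos: assumes "y \<noteq> 0" shows "E2 y > 0"
  using assms ksign[of y] unfolding E2_def
  by (cases "y > 0") (auto simp: zero_less_divide_iff)

lemma E1_mono: "x < y \<Longrightarrow> E1 x < E1 y"
  by (rule smono[where g'=E2]) (auto intro: E1_cont E1_der E2_pos)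

lemma E1_nonneg: "E1 y \<ge> 0"
  using h1pos[of y] by (auto simp: E1_def)

lemma E_pos: "E y > 0"
proof -
  consider "y = 0" | "y > 0" | "y < 0" by linarith
  then show ?thesis
  proof cases
    case 1 then show ?thesis by (simp add: E_def)
  next
    case 2
    then have "exp y - 1 > 0" using exp_gt_one by simp
    then show ?thesis using 2 by (simp add: E_def)
  next
    case 3
    then have "exp y - 1 < 0" by simp
    then have "(exp y - 1) / y > 0" using 3 by (rule divide_neg_neg)
    then show ?thesis using 3 by (simp add: E_def)
  qed
qed

lemma E_mono: "mono E"
proof (rule monoI)
  fix x y :: real assume "x \<le> y"
  then show "E x \<le> E y"
    by (rule DERIV_nonneg_imp_nondecreasing) (use E_der E1_nonneg in blast)
qed

definition Bf :: "real \<Rightarrow> real" where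
  "Bf y = (if y = 0 then 1 else y * exp y / (exp y - 1))"
definition B1 :: "real \<Rightarrow> real" where
  "B1 y = (if y = 0 then 1/2 else exp y * (exp y - 1 - y) / (exp y - 1)^2)"
definition B2 :: "real \<Rightarrow> real" where
  "B2 y = exp y * ((y - 2) * exp y + y + 2) / (exp y - 1)^3"

lemma expm1_ne: "y \<noteq> 0 \<Longrightarrow> exp y - 1 \<noteq> (0::real)"
  by simp

lemma t1: assumes ne: "exp y - 1 \<noteq> (0::real)"
  shows "((\<lambda>y. y * exp y / (exp y - 1)) has_real_derivative exp y * (exp y - 1 - y) / (exp y - 1)^2) (at y)"
  apply (rule DERIV_cong[OF DERIV_divide[OF DERIV_mult[OF DERIV_ident DERIV_exp] DERIV_diff[OF DERIV_exp DERIV_const]]])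
  using ne apply simp
  unfolding power2_eq_square
  apply (rule arg_cong2[where f="(/)"])
   apply (simp add: algebra_simps)
  apply simp
  done

lemma t2: assumes ne: "exp y - 1 \<noteq> (0::real)"
  shows "((\<lambda>y. exp y * (exp y - 1 - y) / (exp y - 1)^2) has_real_derivative exp y * ((y - 2) * exp y + y + 2) / (exp y - 1)^3) (at y)"
proof -
  have d: "((\<lambda>y. exp y * (exp y - 1 - y) / ((exp y - 1)*(exp y - 1))) has_real_derivative
     ((exp y * (exp y - 1 - y) + (exp y - 0 - 1) * exp y) * ((exp y - 1)*(exp y - 1)) - exp y * (exp y - 1 - y) * ((exp y - 0) * (exp y - 1) + (exp y - 0) * (exp y - 1)))
      / (((exp y - 1)*(exp y - 1)) * ((exp y - 1)*(exp y - 1)))) (at y)"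
    apply (rule DERIV_divide)
      apply (rule DERIV_mult DERIV_diff DERIV_exp DERIV_const DERIV_ident)+
    using ne by simp
  have num: "(exp y * (exp y - 1 - y) + (exp y - 0 - 1) * exp y) * ((exp y - 1)*(exp y - 1)) - exp y * (exp y - 1 - y) * ((exp y - 0) * (exp y - 1) + (exp y - 0) * (exp y - 1))
     = (exp y * ((y - 2) * exp y + y + 2)) * (exp y - 1)" by (simp add: algebra_simps)
  have eq: "(exp y * ((y - 2) * exp y + y + 2)) * (exp y - 1) / (((exp y - 1)*(exp y - 1)) * ((exp y - 1)*(exp y - 1)))
     = exp y * ((y - 2) * exp y + y + 2) / (exp y - 1)^3"
    using ne by (simp add: power3_eq_cube)
  show ?thesis using d unfolding num eq power2_eq_square .
qed

lemma Bf_der: "(Bf has_real_derivative B1 y) (at y)"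
proof (cases "y = 0")
  case True
  have "((\<lambda>h::real. (h * exp h / (exp h - 1) - 1) / h) \<longlongrightarrow> (1/2::real)) (at 0)" by real_asymp
  then have "((\<lambda>h. (Bf h - Bf 0) / (h - 0)) \<longlongrightarrow> 1/2) (at 0)"
    by (rule tendsto_cong[THEN iffD1, rotated]) (rule eventually_mono[OF ev_ne0], simp add: Bf_def)
  then show ?thesis using True by (simp add: has_field_derivative_iff B1_def)
next
  case False
  have ne: "exp y - 1 \<noteq> 0" using False by simp
  show ?thesis using t1[OF ne] False
    by (rule_tac has_field_derivative_transform_within_open[where S="-{0}"]) (auto simp: Bf_def B1_def)
qed

lemma B1_der: assumes "y \<noteq> 0" shows "(B1 has_real_derivative B2 y) (at y)"
proof -
  have ne: "exp y - 1 \<noteq> 0" using assms by simp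
  show ?thesis using t2[OF ne] assms unfolding B2_def[symmetric]
    by (rule_tac has_field_derivative_transform_within_open[where S="-{0}"]) (auto simp: B1_def)
qed

lemma B1_cont: "isCont B1 y"
proof (cases "y = 0")
  case True
  have "((\<lambda>h::real. exp h * (exp h - 1 - h) / (exp h - 1)^2) \<longlongrightarrow> 1/2) (at 0)" by real_asymp
  then have "(B1 \<longlongrightarrow> 1/2) (at 0)"
    by (rule tendsto_cong[THEN iffD1, rotated]) (rule eventually_mono[OF ev_ne0], simp add: B1_def)
  then have "(B1 \<longlongrightarrow> B1 0) (at 0)" by (simp add: B1_def)
  then show ?thesis using True by (simp add: isCont_def)
next
  case False
  then show ?thesis using B1_der DERIV_isCont by blast
qed

lemma B2_pos: assumes "y \<noteq> 0" shows "B2 y > 0"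
proof (cases "y > 0")
  case True
  have "exp y - 1 > 0" using True exp_gt_one by simp
  then show ?thesis using h2sign(1)[OF True] unfolding B2_def by simp
next
  case False
  then have y: "y < 0" using assms by simp
  have "exp y - 1 < 0" using y by simp
  then have "(exp y - 1)^3 < 0" by simp
  moreover have "exp y * ((y - 2) * exp y + y + 2) < 0"
    using h2sign(2)[OF y] by (simp add: mult_pos_neg)
  ultimately show ?thesis unfolding B2_def by (simp add: zero_less_divide_iff)
qed

lemma B1_mono: "x < y \<Longrightarrow> B1 x < B1 y"
  by (rule smono[where g'=B2]) (auto intro: B1_cont B1_der B2_pos)

lemma B1_nonneg: "B1 y \<ge> 0"
proof -
  have "exp y - 1 - y \<ge> 0" using exp_ge_add_one_self[of y] by linarith
  then show ?thesis by (auto simp: B1_def)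
qed

lemma Bf_pos: "Bf y > 0"
proof -
  consider "y = 0" | "y > 0" | "y < 0" by linarith
  then show ?thesis
  proof cases
    case 1 then show ?thesis by (simp add: Bf_def)
  next
    case 2
    then have "exp y - 1 > 0" using exp_gt_one by simp
    moreover have "y * exp y > 0" using 2 by simp
    ultimately show ?thesis using 2 by (simp add: Bf_def)
  next
    case 3
    then have "exp y - 1 < 0" by simp
    moreover have "y * exp y < 0" using 3 by (simp add: mult_neg_pos)
    ultimately have "y * exp y / (exp y - 1) > 0" by (rule divide_neg_neg[rotated])
    then show ?thesis using 3 by (simp add: Bf_def)
  qed
qed

lemma Bf_mono: "mono Bf"
proof (rule monoI)
  fix x y :: real assume "x \<le> y"
  then show "Bf x \<le> Bf y"
    by (rule DERIV_nonneg_imp_nondecreasing) (use Bf_der B1_nonneg in blast)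
qed


definition SC :: "(real \<Rightarrow> real) \<Rightarrow> bool" where
  "SC g \<longleftrightarrow> (\<forall>x y u. x \<noteq> y \<and> 0 < u \<and> u < 1 \<longrightarrow> g (u * x + (1 - u) * y) < u * g x + (1 - u) * g y)"

lemma SC_deriv:
  fixes g g' :: "real \<Rightarrow> real"
  assumes der: "\<And>x. (g has_real_derivative g' x) (at x)"
    and sm: "\<And>x y. x < y \<Longrightarrow> g' x < g' y"
  shows "SC g"
  unfolding SC_def
proof (intro allI impI, elim conjE)
  fix x y u :: real assume xy: "x \<noteq> y" and u: "0 < u" "u < 1"
  show "g (u * x + (1 - u) * y) < u * g x + (1 - u) * g y"
  proof (cases "x < y")
    case True then show ?thesis using strict_conv_deriv[OF der sm True u] by blast
  next
    case False
    then have "y < x" using xy by auto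
    then have "g ((1 - u) * y + (1 - (1 - u)) * x) < (1 - u) * g y + (1 - (1 - u)) * g x"
      using strict_conv_deriv[OF der sm, of y x "1 - u"] u by auto
    moreover have "(1 - u) * y + (1 - (1 - u)) * x = u * x + (1 - u) * y" by simp
    moreover have "(1 - u) * g y + (1 - (1 - u)) * g x = u * g x + (1 - u) * g y" by simp
    ultimately show ?thesis by metis
  qed
qed

lemma SC_scale:
  assumes "SC g" "c > 0" "k > 0"
  shows "SC (\<lambda>x. k * g (c * x))"
  unfolding SC_def
proof (intro allI impI, elim conjE)
  fix x y u :: real assume xy: "x \<noteq> y" and u: "0 < u" "u < 1"
  have "c * x \<noteq> c * y" using xy assms by simp
  then have "g (u * (c*x) + (1 - u) * (c*y)) < u * g (c*x) + (1 - u) * g (c*y)"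
    using assms(1) u unfolding SC_def by blast
  moreover have "u * (c*x) + (1 - u) * (c*y) = c * (u * x + (1 - u) * y)" by (simp add: algebra_simps)
  ultimately have "g (c * (u * x + (1 - u) * y)) < u * g (c*x) + (1 - u) * g (c*y)" by simp
  then have "k * g (c * (u * x + (1 - u) * y)) < k * (u * g (c*x) + (1 - u) * g (c*y))"
    using assms(3) by simp
  then show "k * g (c * (u * x + (1 - u) * y)) < u * (k * g (c * x)) + (1 - u) * (k * g (c * y))"
    by (simp add: algebra_simps)
qed

lemma SC_weak:
  assumes "SC g" "0 < u" "u < 1"
  shows "g (u * x + (1 - u) * y) \<le> u * g x + (1 - u) * g y"
proof (cases "x = y")
  case True
  have "u * x + (1 - u) * x = x" by (simp add: algebra_simps)
  moreover have "u * g x + (1 - u) * g x = g x" by (simp add: algebra_simps)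
  ultimately show ?thesis using True by simp
next
  case False then show ?thesis using assms unfolding SC_def by (meson less_imp_le)
qed

lemma mono_scale:
  assumes "mono g" "c > 0" "k > (0::real)"
  shows "mono (\<lambda>x::real. k * g (c * x))"
proof (rule monoI)
  fix x y :: real assume "x \<le> y"
  then have "c * x \<le> c * y" using assms(2) by simp
  then have "g (c * x) \<le> g (c * y)" using monoD[OF assms(1)] by blast
  then show "k * g (c * x) \<le> k * g (c * y)" using assms(3) by simp
qed

lemma mono_prod:
  fixes f g :: "real \<Rightarrow> real"
  assumes "mono f" "mono g" "\<And>x. f x > 0" "\<And>x. g x > 0"
  shows "mono (\<lambda>x. f x * g x)"
proof (rule monoI)
  fix x y :: real assume "x \<le> y"
  then have "f x \<le> f y" "g x \<le> g y" using assms(1,2) by (auto dest: monoD)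
  moreover have "0 \<le> f y" "0 \<le> g x" using assms(3,4) less_imp_le by blast+
  ultimately show "f x * g x \<le> f y * g y" by (rule mult_mono)
qed

lemma prod_SC:
  fixes f g :: "real \<Rightarrow> real"
  assumes fpos: "\<And>x. f x > 0" and gpos: "\<And>x. g x > 0"
    and fm: "mono f" and gm: "mono g"
    and fc: "\<And>x y u. 0 < u \<Longrightarrow> u < 1 \<Longrightarrow> f (u * x + (1 - u) * y) \<le> u * f x + (1 - u) * f y"
    and gc: "SC g"
  shows "SC (\<lambda>x. f x * g x)"
  unfolding SC_def
proof (intro allI impI, elim conjE)
  fix x y u :: real assume xy: "x \<noteq> y" and u: "0 < u" "u < 1"
  define z where "z = u * x + (1 - u) * y"
  define F where "F = u * f x + (1 - u) * f y"
  define G where "G = u * g x + (1 - u) * g y"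
  have fz: "f z \<le> F" unfolding z_def F_def using fc u by blast
  have gz: "g z < G" unfolding z_def G_def using gc u xy unfolding SC_def by blast
  have Fpos: "F > 0" using fz fpos[of z] by linarith
  have "f z * g z \<le> F * g z" using fz gpos[of z] by (simp add: mult_right_mono)
  also have "\<dots> < F * G" using gz Fpos by simp
  also have "\<dots> \<le> u * (f x * g x) + (1 - u) * (f y * g y)"
  proof -
    have "(f x - f y) * (g x - g y) \<ge> 0"
    proof (cases "x \<le> y")
      case True
      then have "f x \<le> f y" "g x \<le> g y" using fm gm unfolding mono_def by auto
      then show ?thesis by (simp add: mult_nonpos_nonpos)
    next
      case False
      then have "f y \<le> f x" "g y \<le> g x" using fm gm unfolding mono_def by auto
      then show ?thesis by simp
    qed
    moreover have "u * (1 - u) \<ge> 0" using u by simp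
    ultimately have "u * (1 - u) * ((f x - f y) * (g x - g y)) \<ge> 0" by simp
    moreover have "u * (f x * g x) + (1 - u) * (f y * g y) - F * G = u * (1 - u) * ((f x - f y) * (g x - g y))"
      unfolding F_def G_def by (simp add: algebra_simps)
    ultimately show ?thesis by linarith
  qed
  finally show "f (u * x + (1 - u) * y) * g (u * x + (1 - u) * y) < u * (f x * g x) + (1 - u) * (f y * g y)"
    unfolding z_def .
qed

lemma alg:
  fixes pA pB pC pD r s x :: real
  assumes "pB > 0" "pC > 0" "pD > 0" "pC \<noteq> pD" "r \<noteq> 0" "s \<noteq> 0" "x \<noteq> 0"
  shows "(pA - pB) / (pC - pD) = pB / pC * (r * ((pA / pB - 1) / (r * x)) * ((1 / s) * (s * x * (pC / pD) / (pC / pD - 1))))"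
proof -
  have "pC - pD \<noteq> 0" using assms by simp
  then show ?thesis using assms by (simp add: field_simps)
qed

lemma SC_E: "SC E" by (rule SC_deriv[OF E_der E1_mono])
lemma SC_Bf: "SC Bf" by (rule SC_deriv[OF Bf_der B1_mono])


lemma k_e1: assumes "(\<kappa>::real) = lb - lc" shows "exp (\<kappa> * x) = exp (x * lb) / exp (x * lc)"
proof -
  have "\<kappa> * x = x * lb - x * lc" unfolding assms by (simp add: algebra_simps)
  then show ?thesis by (simp add: exp_diff)
qed

lemma k_ratio: assumes "a > 0" "b > 0" "c>0" "d>0" "x \<noteq> 0"
  shows "ratio_fun a b c d x = (exp (x * ln a) - exp (x * ln b)) / (exp (x * ln c) - exp (x * ln d))"
  using assms by (simp add: ratio_fun_def powr_def)

lemma k_ne: fixes c d x :: real assumes "c > d" "d > 0" "x \<noteq> 0" shows "exp (x * ln c) \<noteq> exp (x * ln d)"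
proof -
  have "c > 0" using assms by linarith
  then have "ln d < ln c" using assms by simp
  then have "x * ln c \<noteq> x * ln d" using assms(3) by simp
  then show ?thesis by simp
qed

lemma k_main:
  assumes x: "x \<noteq> 0" and rho: "\<rho> > 0" and sig: "\<sigma> > 0"
   and e1: "exp (\<kappa> * x) = pB / pC" and e2: "exp (\<rho> * x) = pA / pB" and e3: "exp (\<sigma> * x) = pC / pD"
   and pp: "pB > 0" "pC > 0" "pD > 0" "pC \<noteq> pD"
  shows "(pA - pB) / (pC - pD) = exp (\<kappa> * x) * (\<rho> * E (\<rho> * x) * ((1 / \<sigma>) * Bf (\<sigma> * x)))"
proof -
  have EE: "E (\<rho> * x) = (exp (\<rho> * x) - 1) / (\<rho> * x)" using x rho by (simp add: E_def)
  have BB: "Bf (\<sigma> * x) = \<sigma> * x * exp (\<sigma> * x) / (exp (\<sigma> * x) - 1)" using x sig by (simp add: Bf_def)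
  show ?thesis unfolding EE BB e1 e2 e3
    by (rule alg[OF pp]) (use x rho sig in auto)
qed


theorem theorem2p2:
  fixes a b c d :: real
  assumes "a > b" and "b \<ge> c" and "c > d" and "d > 0"
  shows "strict_convex_on UNIV (ratio_fun a b c d)"
proof -
  define \<rho> where "\<rho> = ln (a / b)"
  define \<sigma> where "\<sigma> = ln (c / d)"
  define \<kappa> where "\<kappa> = ln (b / c)"
  have pos: "a > 0" "b > 0" "c > 0" using assms by linarith+
  have ab: "1 < a / b" using assms pos by simp
  have cd: "1 < c / d" using assms pos by simp
  have bc: "1 \<le> b / c" using assms pos by simp
  have rho: "\<rho> > 0" unfolding \<rho>_def using ab by (rule ln_gt_zero)
  have sig: "\<sigma> > 0" unfolding \<sigma>_def using cd by (rule ln_gt_zero)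
  have kap: "\<kappa> \<ge> 0" unfolding \<kappa>_def using bc by (rule ln_ge_zero)
  have lr: "\<rho> = ln a - ln b" unfolding \<rho>_def using pos by (simp add: ln_div)
  have ls: "\<sigma> = ln c - ln d" unfolding \<sigma>_def using pos assms by (simp add: ln_div)
  have lk: "\<kappa> = ln b - ln c" unfolding \<kappa>_def using pos by (simp add: ln_div)
  define P where "P = (\<lambda>x. \<rho> * E (\<rho> * x))"
  define Q where "Q = (\<lambda>x. (1 / \<sigma>) * Bf (\<sigma> * x))"
  define R where "R = (\<lambda>x. exp (\<kappa> * x))"
  have key: "ratio_fun a b c d x = R x * (P x * Q x)" for x
  proof (cases "x = 0")
    case True
    have "ratio_fun a b c d x = \<rho> / \<sigma>" using True by (simp add: ratio_fun_def \<rho>_def \<sigma>_def)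
    moreover have "R x * (P x * Q x) = \<rho> / \<sigma>" using True by (simp add: R_def P_def Q_def E_def Bf_def)
    ultimately show ?thesis by simp
  next
    case x: False
    have r: "ratio_fun a b c d x = (exp (x * ln a) - exp (x * ln b)) / (exp (x * ln c) - exp (x * ln d))"
      by (rule k_ratio) (use pos assms x in auto)
    have "(exp (x * ln a) - exp (x * ln b)) / (exp (x * ln c) - exp (x * ln d))
       = exp (\<kappa> * x) * (\<rho> * E (\<rho> * x) * ((1 / \<sigma>) * Bf (\<sigma> * x)))"
      by (rule k_main[OF x rho sig k_e1[OF lk] k_e1[OF lr] k_e1[OF ls]])
         (use k_ne[OF assms(3,4) x] in auto)
    then show ?thesis unfolding r R_def P_def Q_def by simp
  qed
  have fun_eq: "ratio_fun a b c d = (\<lambda>x. R x * (P x * Q x))" using key by (rule ext)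
  have SCP: "SC P" unfolding P_def by (rule SC_scale[OF SC_E rho rho])
  have s1: "1 / \<sigma> > 0" using sig by simp
  have SCQ: "SC Q" unfolding Q_def by (rule SC_scale[OF SC_Bf sig s1])
  have mP: "mono P" unfolding P_def by (rule mono_scale[OF E_mono rho rho])
  have mQ: "mono Q" unfolding Q_def by (rule mono_scale[OF Bf_mono sig s1])
  have pP: "P x > 0" for x unfolding P_def using rho E_pos by simp
  have pQ: "Q x > 0" for x unfolding Q_def using s1 Bf_pos by simp
  have SCPQ: "SC (\<lambda>x. P x * Q x)"
    by (rule prod_SC[OF pP pQ mP mQ SC_weak[OF SCP] SCQ])
  have pR: "R x > 0" for x unfolding R_def by simp
  have mR: "mono R"
  proof (rule monoI)
    fix x y :: real assume "x \<le> y"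
    then have "\<kappa> * x \<le> \<kappa> * y" using kap by (rule mult_left_mono)
    then show "R x \<le> R y" unfolding R_def by simp
  qed
  have cR: "R (u * x + (1 - u) * y) \<le> u * R x + (1 - u) * R y" if u: "0 < u" "u < 1" for x y u
  proof -
    have "exp ((1 - (1 - u)) *\<^sub>R (\<kappa> * x) + (1 - u) *\<^sub>R (\<kappa> * y)) \<le> (1 - (1 - u)) * exp (\<kappa> * x) + (1 - u) * exp (\<kappa> * y)"
      by (rule convex_onD[OF exp_convex]) (use u in auto)
    moreover have "(1 - (1 - u)) *\<^sub>R (\<kappa> * x) + (1 - u) *\<^sub>R (\<kappa> * y) = \<kappa> * (u * x + (1 - u) * y)"
      by (simp add: algebra_simps)
    moreover have "(1 - (1 - u)) * exp (\<kappa> * x) + (1 - u) * exp (\<kappa> * y) = u * R x + (1 - u) * R y"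
      unfolding R_def by simp
    ultimately show ?thesis unfolding R_def by simp
  qed
  have pPQ: "P x * Q x > 0" for x using pP pQ by simp
  have "SC (\<lambda>x. R x * (P x * Q x))"
    by (rule prod_SC[OF pR pPQ mR mono_prod[OF mP mQ pP pQ] cR SCPQ])
  then show ?thesis unfolding strict_convex_on_def fun_eq SC_def by simp
qed

end
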